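(* If the generating distribution is Markov to a chain graph satisfying tier symmetry and the causal ordering assumption, then the search space of Greedy Network Search consists of graphs that each belong to their own Markov equivalence class of size 1.
   Context: Setting: LWF chain graphs (graphs with directed and undirected edges and no partially directed cycles) over variables for units $i$ in blocks, each unit having baseline covariates $\mathbf{L}_i$, a treatment $A_i$ and an outcome $Y_i$. The within-unit structure is known and fixed; only cross-unit edges (network ties) between units $i \neq j$ are searched over. Causal ordering assumption: for each unit $i$, $\mathbf{L}_i \subseteq \mathrm{pa}(A_i)$ and $\mathbf{L}_i \cup \{A_i\} \subseteq \mathrm{pa}(Y_i)$, and cross-unit edges respect this ordering (e.g. $A_i \rightarrow Y_j$ allowed, $Y_j \rightarrow A_i$ ruled out). Tier symmetry: edges between variables of the same tier across units are undirected ($L_i - L_j$, $A_i - A_j$, $Y_i - Y_j$), and there are no undirected edges connecting different tiers (e.g. no $A_i - Y_j$). Greedy Network Search: starting from the complete (conditional) Markov random field on one tier ($\mathbf{L}$, $\mathbf{A}$ given $\mathbf{L}$, or $\mathbf{Y}$ given $\mathbf{L},\mathbf{A}$), it repeatedly deletes the single network-tie edge whose removal most increases the pseudolikelihood-based BIC score (PBIC $= 2\ln$ pseudolikelihood $- k\ln n$), stopping when no deletion improves the score. Thus the only edges added/removed in the search space are of the form $L_i - L_j$, $A_i - A_j$, $Y_i - Y_j$, $L_i \rightarrow A_j$, $L_i \rightarrow Y_j$, $A_i \rightarrow Y_j$. Two graphs are Markov equivalent if they imply the same conditional independences under the chain graph global Markov property. *)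

theory Defs
  imports Main
begin

text \<open>A graph on vertex set V is given by a directed edge relation (dir a b means a -> b)
and an undirected edge relation (und a b means a - b).\<close>

record 'v cgraph =
  dir :: "'v \<Rightarrow> 'v \<Rightarrow> bool"
  und :: "'v \<Rightarrow> 'v \<Rightarrow> bool"

definition edge_rel :: "'v cgraph \<Rightarrow> ('v \<times> 'v) set" where
  "edge_rel G = {(a, b). dir G a b \<or> und G a b}"

text \<open>Chain graph: edges only within V, undirected edges symmetric and loop-free,
and no partially directed cycle (a cycle containing at least one directed edge, all
directed edges pointing the same way along the cycle).\<close>
definition chain_graph :: "'v set \<Rightarrow> 'v cgraph \<Rightarrow> bool" where
  "chain_graph V G \<longleftrightarrow>
     (\<forall>a b. dir G a b \<longrightarrow> a \<in> V \<and> b \<in> V) \<and>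
     (\<forall>a b. und G a b \<longrightarrow> a \<in> V \<and> b \<in> V) \<and>
     (\<forall>a b. und G a b \<longrightarrow> und G b a) \<and>
     (\<forall>a. \<not> und G a a) \<and>
     (\<forall>a b. dir G a b \<longrightarrow> (b, a) \<notin> (edge_rel G)\<^sup>*)"

definition anterior :: "'v cgraph \<Rightarrow> 'v set \<Rightarrow> 'v set" where
  "anterior G S = {a. \<exists>s\<in>S. (a, s) \<in> (edge_rel G)\<^sup>*}"

definition comp_in :: "'v cgraph \<Rightarrow> 'v set \<Rightarrow> 'v \<Rightarrow> 'v set" where
  "comp_in G W t = {c \<in> W. (t, c) \<in> ({(a, b). a \<in> W \<and> b \<in> W \<and> und G a b})\<^sup>*}"

text \<open>Adjacency in the (LWF) moral graph of the subgraph induced by W: skeleton edges plus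
edges between any two parents of a common chain component.\<close>
definition moral_adj :: "'v cgraph \<Rightarrow> 'v set \<Rightarrow> 'v \<Rightarrow> 'v \<Rightarrow> bool" where
  "moral_adj G W a b \<longleftrightarrow> a \<in> W \<and> b \<in> W \<and> a \<noteq> b \<and>
     (dir G a b \<or> dir G b a \<or> und G a b \<or>
      (\<exists>t\<in>W. \<exists>t'\<in>comp_in G W t. dir G a t \<and> dir G b t'))"

definition separates :: "('v \<Rightarrow> 'v \<Rightarrow> bool) \<Rightarrow> 'v set \<Rightarrow> 'v set \<Rightarrow> 'v set \<Rightarrow> 'v set \<Rightarrow> bool" where
  "separates M W A B C \<longleftrightarrow>
     (\<forall>a\<in>A. \<forall>b\<in>B. (a, b) \<notin> ({(x, y). x \<in> W - C \<and> y \<in> W - C \<and> M x y})\<^sup>*)"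

text \<open>Conditional independence statements A _||_ B | C implied by the LWF global Markov property.\<close>
definition global_indeps :: "'v set \<Rightarrow> 'v cgraph \<Rightarrow> ('v set \<times> 'v set \<times> 'v set) set" where
  "global_indeps V G = {(A, B, C). A \<subseteq> V \<and> B \<subseteq> V \<and> C \<subseteq> V \<and>
      A \<inter> B = {} \<and> A \<inter> C = {} \<and> B \<inter> C = {} \<and>
      (let W = anterior G (A \<union> B \<union> C) in separates (moral_adj G W) W A B C)}"

definition markov_equiv :: "'v set \<Rightarrow> 'v cgraph \<Rightarrow> 'v cgraph \<Rightarrow> bool" where
  "markov_equiv V G H \<longleftrightarrow> global_indeps V G = global_indeps V H"

datatype tier = TL | TA | TY

fun tier_rank :: "tier \<Rightarrow> nat" where
  "tier_rank TL = 0" | "tier_rank TA = 1" | "tier_rank TY = 2"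

text \<open>Setup: each vertex belongs to a unit and a tier; each unit has exactly one treatment A_i
and one outcome Y_i; the fixed within-unit structure Dw/Uw satisfies the causal ordering
assumption L_i in pa(A_i) and L_i u {A_i} in pa(Y_i).\<close>
definition unit_setup :: "'v set \<Rightarrow> ('v \<Rightarrow> 'u) \<Rightarrow> ('v \<Rightarrow> tier) \<Rightarrow>
    ('v \<Rightarrow> 'v \<Rightarrow> bool) \<Rightarrow> ('v \<Rightarrow> 'v \<Rightarrow> bool) \<Rightarrow> bool" where
  "unit_setup V unit tr Dw Uw \<longleftrightarrow>
     (\<forall>i \<in> unit ` V. \<exists>!a. a \<in> V \<and> unit a = i \<and> tr a = TA) \<and>
     (\<forall>i \<in> unit ` V. \<exists>!y. y \<in> V \<and> unit y = i \<and> tr y = TY) \<and>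
     (\<forall>l\<in>V. \<forall>a\<in>V. unit l = unit a \<and> tr l = TL \<and> tr a = TA \<longrightarrow> Dw l a) \<and>
     (\<forall>x\<in>V. \<forall>y\<in>V. unit x = unit y \<and> tr x \<noteq> TY \<and> tr y = TY \<longrightarrow> Dw x y)"

text \<open>Graphs in the search space: chain graphs on V whose within-unit part is the fixed
structure and whose cross-unit edges (network ties) are of the forms
L_i - L_j, A_i - A_j, Y_i - Y_j, L_i -> A_j, L_i -> Y_j, A_i -> Y_j (tier symmetry and
causal ordering).\<close>
definition in_search_space :: "'v set \<Rightarrow> ('v \<Rightarrow> 'u) \<Rightarrow> ('v \<Rightarrow> tier) \<Rightarrow>
    ('v \<Rightarrow> 'v \<Rightarrow> bool) \<Rightarrow> ('v \<Rightarrow> 'v \<Rightarrow> bool) \<Rightarrow> 'v cgraph \<Rightarrow> bool" where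
  "in_search_space V unit tr Dw Uw G \<longleftrightarrow>
     chain_graph V G \<and>
     (\<forall>a\<in>V. \<forall>b\<in>V. unit a = unit b \<longrightarrow> dir G a b = Dw a b \<and> und G a b = Uw a b) \<and>
     (\<forall>a\<in>V. \<forall>b\<in>V. unit a \<noteq> unit b \<longrightarrow>
        (und G a b \<longrightarrow> tr a = tr b) \<and>
        (dir G a b \<longrightarrow> tier_rank (tr a) < tier_rank (tr b)))"

end

theory Submission
  imports Defs
begin

definition adjc :: "'v cgraph \<Rightarrow> 'v \<Rightarrow> 'v \<Rightarrow> bool" where
  "adjc G a b \<longleftrightarrow> dir G a b \<or> dir G b a \<or> und G a b \<or> und G b a"

lemma und_in_edge: "und G x y \<Longrightarrow> (x, y) \<in> edge_rel G"
  by (simp add: edge_rel_def)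

lemma nsep:
  assumes sym: "\<forall>x y. und G x y \<longrightarrow> und G y x" and "adjc G a b" "a \<noteq> b" "a \<notin> C" "b \<notin> C"
  shows "({a}, {b}, C) \<notin> global_indeps V G"
proof
  assume "({a}, {b}, C) \<in> global_indeps V G"
  then have s: "separates (moral_adj G (anterior G ({a} \<union> {b} \<union> C))) (anterior G ({a} \<union> {b} \<union> C)) {a} {b} C"
    unfolding global_indeps_def Let_def by (simp only: mem_Collect_eq case_prod_conv)
  define W where "W = anterior G ({a} \<union> {b} \<union> C)"
  have aW: "a \<in> W" and bW: "b \<in> W" unfolding W_def anterior_def by auto
  have "moral_adj G W a b" using assms aW bW unfolding moral_adj_def adjc_def by blast
  then have "(a, b) \<in> {(x, y). x \<in> W - C \<and> y \<in> W - C \<and> moral_adj G W x y}\<^sup>*"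
    using aW bW assms by auto
  then show False using s unfolding separates_def W_def by auto
qed

lemma ant_V:
  assumes "chain_graph V H" "(x, s) \<in> (edge_rel H)\<^sup>*" "x \<noteq> s"
  shows "x \<in> V"
proof -
  from assms(2,3) obtain y where "(x, y) \<in> edge_rel H"
    by (metis converse_rtranclE)
  then show ?thesis using assms(1) unfolding chain_graph_def edge_rel_def by blast
qed

lemma sep:
  assumes cg: "chain_graph V H" and ne: "a \<noteq> b" and aV: "a \<in> V" and bV: "b \<in> V"
    and na: "\<not> adjc H a b"
  shows "({a}, {b}, anterior H {a, b} - {a, b}) \<in> global_indeps V H"
proof -
  define C where "C = anterior H {a, b} - {a, b}"
  have CV: "C \<subseteq> V"
  proof
    fix x assume "x \<in> C"
    then obtain s where "s \<in> {a, b}" "(x, s) \<in> (edge_rel H)\<^sup>*" "x \<noteq> s"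
      unfolding C_def anterior_def by auto
    then show "x \<in> V" using ant_V[OF cg] by blast
  qed
  have WE: "anterior H ({a} \<union> {b} \<union> C) = anterior H {a, b}"
  proof
    show "anterior H ({a} \<union> {b} \<union> C) \<subseteq> anterior H {a, b}"
    proof
      fix x assume "x \<in> anterior H ({a} \<union> {b} \<union> C)"
      then obtain s where s: "s \<in> {a} \<union> {b} \<union> C" "(x, s) \<in> (edge_rel H)\<^sup>*"
        unfolding anterior_def by auto
      show "x \<in> anterior H {a, b}"
      proof (cases "s \<in> C")
        case True
        then obtain t where "t \<in> {a, b}" "(s, t) \<in> (edge_rel H)\<^sup>*"
          unfolding C_def anterior_def by auto
        then show ?thesis using s(2) unfolding anterior_def
          using rtrancl_trans by fastforce
      next
        case False
        then show ?thesis using s unfolding anterior_def by auto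
      qed
    qed
    show "anterior H {a, b} \<subseteq> anterior H ({a} \<union> {b} \<union> C)"
      unfolding anterior_def by auto
  qed
  define W where "W = anterior H {a, b}"
  have nomor: "\<not> moral_adj H W x y" if xin: "x \<in> {a, b}" and yin: "y \<in> {a, b}" and xy: "x \<noteq> y" for x y
  proof
    assume "moral_adj H W x y"
    moreover have "\<not> dir H x y \<and> \<not> dir H y x \<and> \<not> und H x y"
      using na xin yin xy unfolding adjc_def by auto
    ultimately have "\<exists>t\<in>W. \<exists>t'\<in>comp_in H W t. dir H x t \<and> dir H y t'"
      unfolding moral_adj_def by blast
    then obtain t t' where tW: "t \<in> W" and t': "t' \<in> comp_in H W t"
      and at: "dir H x t" and bt: "dir H y t'" by blast
    have "(t, t') \<in> {(x, y). x \<in> W \<and> y \<in> W \<and> und H x y}\<^sup>*"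
      using t' unfolding comp_in_def by auto
    then have tt: "(t', t) \<in> (edge_rel H)\<^sup>*"
    proof (induction rule: rtrancl_induct)
      case base then show ?case by simp
    next
      case (step y z)
      then have "und H z y" using cg unfolding chain_graph_def by auto
      then have "(z, y) \<in> edge_rel H" by (rule und_in_edge)
      then show ?case using step.IH by (meson converse_rtrancl_into_rtrancl)
    qed
    obtain s where sab: "s \<in> {a, b}" and ts: "(t, s) \<in> (edge_rel H)\<^sup>*"
      using tW unfolding W_def anterior_def by auto
    have acyc: "\<And>x y. dir H x y \<Longrightarrow> (y, x) \<notin> (edge_rel H)\<^sup>*"
      using cg unfolding chain_graph_def by blast
    show False
    proof (cases "s = x")
      case True then show False using acyc[OF at] ts by simp
    next
      case False then have "s = y" using sab xin yin xy by auto
      then have "(t', y) \<in> (edge_rel H)\<^sup>*" using tt ts by (meson rtrancl_trans)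
      then show False using acyc[OF bt] by simp
    qed
  qed
  have sepr: "separates (moral_adj H W) W {a} {b} C"
  proof -
    have "{(x, y). x \<in> W - C \<and> y \<in> W - C \<and> moral_adj H W x y} = {}"
    proof -
      have "W - C \<subseteq> {a, b}" unfolding W_def C_def by auto
      show ?thesis
      proof (rule equals0I)
        fix p assume "p \<in> {(x, y). x \<in> W - C \<and> y \<in> W - C \<and> moral_adj H W x y}"
        then obtain x y where p: "p = (x, y)" "x \<in> W - C" "y \<in> W - C" "moral_adj H W x y" by blast
        then have "x \<noteq> y" unfolding moral_adj_def by blast
        moreover have "x \<in> {a, b}" "y \<in> {a, b}" using p(2,3) \<open>W - C \<subseteq> {a, b}\<close> by blast+
        ultimately show False using nomor p(4) by blast
      qed
    qed
    then show ?thesis unfolding separates_def using ne by (simp only: rtrancl_empty) auto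
  qed
  have WE': "anterior H ({a} \<union> {b} \<union> C) = W" using WE unfolding W_def .
  have "({a}, {b}, C) \<in> global_indeps V H"
    unfolding global_indeps_def Let_def mem_Collect_eq case_prod_conv WE'
  proof (intro conjI)
    show "{a} \<subseteq> V" "{b} \<subseteq> V" using aV bV by auto
    show "C \<subseteq> V" by (rule CV)
    show "{a} \<inter> {b} = {}" using ne by auto
    show "{a} \<inter> C = {}" "{b} \<inter> C = {}" unfolding C_def by auto
    show "separates (moral_adj H W) W {a} {b} C" by (rule sepr)
  qed
  then show ?thesis unfolding C_def .
qed

lemma differ:
  assumes "chain_graph V G" "chain_graph V H" "a \<noteq> b" "a \<in> V" "b \<in> V"
    "adjc G a b" "\<not> adjc H a b"
  shows "global_indeps V G \<noteq> global_indeps V H"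
proof -
  have sy: "\<forall>x y. und G x y \<longrightarrow> und G y x" using assms(1) unfolding chain_graph_def by blast
  have n: "a \<notin> anterior H {a, b} - {a, b}" "b \<notin> anterior H {a, b} - {a, b}" by auto
  show ?thesis using sep[OF assms(2-5,7)] nsep[OF sy assms(6,3) n, of V] by blast
qed

lemma cg_dir: "chain_graph V G \<Longrightarrow> dir G a b \<Longrightarrow> a \<in> V \<and> b \<in> V"
  unfolding chain_graph_def by blast
lemma cg_und: "chain_graph V G \<Longrightarrow> und G a b \<Longrightarrow> a \<in> V \<and> b \<in> V"
  unfolding chain_graph_def by blast
lemma cg_sym: "chain_graph V G \<Longrightarrow> und G a b = und G b a"
  unfolding chain_graph_def by blast

lemma ss_same: "in_search_space V unit tr Dw Uw G \<Longrightarrow> a \<in> V \<Longrightarrow> b \<in> V \<Longrightarrow> unit a = unit b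
   \<Longrightarrow> dir G a b = Dw a b \<and> und G a b = Uw a b"
  unfolding in_search_space_def by blast
lemma ss_diff: "in_search_space V unit tr Dw Uw G \<Longrightarrow> a \<in> V \<Longrightarrow> b \<in> V \<Longrightarrow> unit a \<noteq> unit b
   \<Longrightarrow> (und G a b \<longrightarrow> tr a = tr b) \<and> (dir G a b \<longrightarrow> tier_rank (tr a) < tier_rank (tr b))"
  unfolding in_search_space_def by blast
lemma ss_cg: "in_search_space V unit tr Dw Uw G \<Longrightarrow> chain_graph V G"
  unfolding in_search_space_def by blast

theorem lemma3:
  fixes V :: "'v set" and unit :: "'v \<Rightarrow> 'u" and tr :: "'v \<Rightarrow> tier"
    and Dw Uw :: "'v \<Rightarrow> 'v \<Rightarrow> bool" and G :: "'v cgraph"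
  assumes "finite V"
    and "unit_setup V unit tr Dw Uw"
    and "in_search_space V unit tr Dw Uw G"
  shows "{H. in_search_space V unit tr Dw Uw H \<and> markov_equiv V G H} = {G}"
proof -
  have main: "H = G" if HS: "in_search_space V unit tr Dw Uw H" and me: "markov_equiv V G H" for H
  proof -
    have cgG: "chain_graph V G" and cgH: "chain_graph V H"
      using ss_cg HS assms(3) by blast+
    have gi: "global_indeps V G = global_indeps V H" using me unfolding markov_equiv_def .
    have key: "adjc G a b = adjc H a b" if "a \<in> V" "b \<in> V" "a \<noteq> b" for a b
    proof (rule ccontr)
      assume "adjc G a b \<noteq> adjc H a b"
      then have "(adjc G a b \<and> \<not> adjc H a b) \<or> (adjc H a b \<and> \<not> adjc G a b)" by blast
      then show False
      proof
        assume h: "adjc G a b \<and> \<not> adjc H a b"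
        show False using differ[OF cgG cgH that(3,1,2)] h gi by blast
      next
        assume h: "adjc H a b \<and> \<not> adjc G a b"
        show False using differ[OF cgH cgG that(3,1,2)] h gi by simp
      qed
    qed
    have eq: "dir G a b = dir H a b \<and> und G a b = und H a b" for a b
    proof (cases "a \<in> V \<and> b \<in> V")
      case False
      then have "\<not> dir G a b" "\<not> dir H a b" "\<not> und G a b" "\<not> und H a b"
        using cg_dir[OF cgG] cg_dir[OF cgH] cg_und[OF cgG] cg_und[OF cgH] by blast+
      then show ?thesis by simp
    next
      case True
      then have aV: "a \<in> V" and bV: "b \<in> V" by auto
      show ?thesis
      proof (cases "unit a = unit b")
        case True
        show ?thesis using ss_same[OF HS aV bV True] ss_same[OF assms(3) aV bV True] by simp
      next
        case False
        then have ab: "a \<noteq> b" by auto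
        have k: "adjc G a b = adjc H a b" using key aV bV ab by blast
        have cG1: "(und G a b \<longrightarrow> tr a = tr b) \<and> (dir G a b \<longrightarrow> tier_rank (tr a) < tier_rank (tr b))"
          using ss_diff[OF assms(3) aV bV False] .
        have cG2: "(und G b a \<longrightarrow> tr b = tr a) \<and> (dir G b a \<longrightarrow> tier_rank (tr b) < tier_rank (tr a))"
          using ss_diff[OF assms(3) bV aV] False by metis
        have cH1: "(und H a b \<longrightarrow> tr a = tr b) \<and> (dir H a b \<longrightarrow> tier_rank (tr a) < tier_rank (tr b))"
          using ss_diff[OF HS aV bV False] .
        have cH2: "(und H b a \<longrightarrow> tr b = tr a) \<and> (dir H b a \<longrightarrow> tier_rank (tr b) < tier_rank (tr a))"
          using ss_diff[OF HS bV aV] False by metis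
        have sG: "und G a b = und G b a" and sH: "und H a b = und H b a"
          using cg_sym[OF cgG] cg_sym[OF cgH] by blast+
        have kk: "(dir G a b \<or> dir G b a \<or> und G a b) = (dir H a b \<or> dir H b a \<or> und H a b)"
          using k sG sH unfolding adjc_def by blast
        show ?thesis
        proof (cases "tr a = tr b")
          case True
          then show ?thesis using kk cG1 cG2 cH1 cH2 by auto
        next
          case ne: False
          then show ?thesis using kk cG1 cG2 cH1 cH2 by (cases "tier_rank (tr a) < tier_rank (tr b)") auto
        qed
      qed
    qed
    have "dir H = dir G" "und H = und G" using eq by auto
    then show "H = G" by (intro cgraph.equality) auto
  qed
  show ?thesis
  proof
    show "{H. in_search_space V unit tr Dw Uw H \<and> markov_equiv V G H} \<subseteq> {G}"
      using main by auto
    show "{G} \<subseteq> {H. in_search_space V unit tr Dw Uw H \<and> markov_equiv V G H}"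
      using assms(3) by (simp add: markov_equiv_def)
  qed
qed

end
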